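(* Let $R$ be a commutative ring, $M$ an $R$-module and $\mathfrak{p}\in\mathrm{Spec}(R)$. Then $R/\mathfrak{p} \prec M$ in $\mathrm{Mod}(R)$ if and only if $M_{\mathfrak{p}} \neq 0$.
   Context: For $R$-modules $M,N$, $M\prec N$ means $M$ is a subquotient of a direct sum of (possibly infinitely many) copies of $N$. *)

theory Defs
  imports "HOL-Algebra.Module" "HOL-Algebra.QuotRing"
begin

text \<open>Direct sum of copies of the R-module N indexed by the set I:
  finitely supported families (vanishing outside I), with pointwise operations.
  (The ring fields mult/one of the module record are irrelevant for modules.)\<close>
definition dsum_copies ::
  "('a, 'r) ring_scheme \<Rightarrow> ('a, 'b, 'm) module_scheme \<Rightarrow> 'c set \<Rightarrow> ('a, 'c \<Rightarrow> 'b) module" where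
  "dsum_copies R N I =
    \<lparr> carrier = {f. (\<forall>i. f i \<in> carrier N) \<and> (\<forall>i. i \<notin> I \<longrightarrow> f i = \<zero>\<^bsub>N\<^esub>)
                    \<and> finite {i. f i \<noteq> \<zero>\<^bsub>N\<^esub>}},
      mult = (\<lambda>f g i. \<zero>\<^bsub>N\<^esub>),
      one = (\<lambda>i. \<zero>\<^bsub>N\<^esub>),
      zero = (\<lambda>i. \<zero>\<^bsub>N\<^esub>),
      add = (\<lambda>f g i. f i \<oplus>\<^bsub>N\<^esub> g i),
      smult = (\<lambda>r f i. r \<odot>\<^bsub>N\<^esub> f i) \<rparr>"

definition quot_module :: "('a, 'r) ring_scheme \<Rightarrow> 'a set \<Rightarrow> ('a, 'a set) module" where
  "quot_module R I =
    \<lparr> carrier = carrier (R Quot I),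
      mult = mult (R Quot I),
      one = one (R Quot I),
      zero = zero (R Quot I),
      add = add (R Quot I),
      smult = (\<lambda>r X. (I +>\<^bsub>R\<^esub> r) \<otimes>\<^bsub>R Quot I\<^esub> X) \<rparr>"

definition linear_on ::
  "('a, 'r) ring_scheme \<Rightarrow> ('a, 'b, 'm) module_scheme \<Rightarrow> 'b set \<Rightarrow> ('a, 'd, 'n) module_scheme
   \<Rightarrow> ('b \<Rightarrow> 'd) \<Rightarrow> bool" where
  "linear_on R A K B f \<longleftrightarrow>
     f \<in> K \<rightarrow> carrier B \<and>
     (\<forall>x\<in>K. \<forall>y\<in>K. f (x \<oplus>\<^bsub>A\<^esub> y) = f x \<oplus>\<^bsub>B\<^esub> f y) \<and>
     (\<forall>r\<in>carrier R. \<forall>x\<in>K. f (r \<odot>\<^bsub>A\<^esub> x) = r \<odot>\<^bsub>B\<^esub> f x)"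

text \<open>X \<prec> N: X is a subquotient of a direct sum of copies of N, i.e. there is an
  index set I (of type 'c), a submodule K of the direct sum of I copies of N and a
  surjective R-linear map K \<rightarrow> X (so X \<cong> K / ker).\<close>
definition subquot_of_sum ::
  "('a, 'r) ring_scheme \<Rightarrow> ('a, 'd, 'n) module_scheme \<Rightarrow> ('a, 'b, 'm) module_scheme
   \<Rightarrow> 'c itself \<Rightarrow> bool" where
  "subquot_of_sum R X N (_ :: 'c itself) \<longleftrightarrow>
     (\<exists>(I :: 'c set) K f. submodule K R (dsum_copies R N I)
        \<and> linear_on R (dsum_copies R N I) K X f \<and> f ` K = carrier X)"

definition loc_rel ::
  "('a, 'r) ring_scheme \<Rightarrow> ('a, 'b, 'm) module_scheme \<Rightarrow> 'a set \<Rightarrow> (('b \<times> 'a) \<times> ('b \<times> 'a)) set" where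
  "loc_rel R M p = {((m, s), (m', s')).
      m \<in> carrier M \<and> m' \<in> carrier M \<and> s \<in> carrier R - p \<and> s' \<in> carrier R - p \<and>
      (\<exists>u \<in> carrier R - p. u \<odot>\<^bsub>M\<^esub> ((s' \<odot>\<^bsub>M\<^esub> m) \<ominus>\<^bsub>M\<^esub> (s \<odot>\<^bsub>M\<^esub> m')) = \<zero>\<^bsub>M\<^esub>)}"

definition loc_carrier :: "('a, 'r) ring_scheme \<Rightarrow> ('a, 'b, 'm) module_scheme \<Rightarrow> 'a set \<Rightarrow> ('b \<times> 'a) set set" where
  "loc_carrier R M p = (carrier M \<times> (carrier R - p)) // loc_rel R M p"

definition loc_zero :: "('a, 'r) ring_scheme \<Rightarrow> ('a, 'b, 'm) module_scheme \<Rightarrow> 'a set \<Rightarrow> ('b \<times> 'a) set" where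
  "loc_zero R M p = loc_rel R M p `` {(\<zero>\<^bsub>M\<^esub>, \<one>\<^bsub>R\<^esub>)}"

definition loc_nonzero :: "('a, 'r) ring_scheme \<Rightarrow> ('a, 'b, 'm) module_scheme \<Rightarrow> 'a set \<Rightarrow> bool" where
  "loc_nonzero R M p \<longleftrightarrow> loc_carrier R M p \<noteq> {loc_zero R M p}"

end

theory Submission
  imports Defs
begin

lemma kill_lemma:
  assumes "module R M" and "u \<in> carrier R" "v \<in> carrier R" "s \<in> carrier R" "s' \<in> carrier R"
    "m \<in> carrier M" "m' \<in> carrier M" "u \<odot>\<^bsub>M\<^esub> m = \<zero>\<^bsub>M\<^esub>" "v \<odot>\<^bsub>M\<^esub> m' = \<zero>\<^bsub>M\<^esub>"
  shows "(u \<otimes>\<^bsub>R\<^esub> v) \<odot>\<^bsub>M\<^esub> ((s' \<odot>\<^bsub>M\<^esub> m) \<ominus>\<^bsub>M\<^esub> (s \<odot>\<^bsub>M\<^esub> m')) = \<zero>\<^bsub>M\<^esub>"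
proof -
  interpret M: module R M by fact
  have 1: "(u \<otimes>\<^bsub>R\<^esub> v) \<odot>\<^bsub>M\<^esub> (s' \<odot>\<^bsub>M\<^esub> m) = \<zero>\<^bsub>M\<^esub>"
  proof -
    have "(u \<otimes>\<^bsub>R\<^esub> v) \<odot>\<^bsub>M\<^esub> (s' \<odot>\<^bsub>M\<^esub> m) = ((u \<otimes>\<^bsub>R\<^esub> v) \<otimes>\<^bsub>R\<^esub> s') \<odot>\<^bsub>M\<^esub> m"
      using assms by (simp add: M.smult_assoc1)
    also have "(u \<otimes>\<^bsub>R\<^esub> v) \<otimes>\<^bsub>R\<^esub> s' = (v \<otimes>\<^bsub>R\<^esub> s') \<otimes>\<^bsub>R\<^esub> u"
      using assms by (simp add: M.R.m_ac)
    also have "((v \<otimes>\<^bsub>R\<^esub> s') \<otimes>\<^bsub>R\<^esub> u) \<odot>\<^bsub>M\<^esub> m = \<zero>\<^bsub>M\<^esub>"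
      using assms by (simp add: M.smult_assoc1)
    finally show ?thesis .
  qed
  have 2: "(u \<otimes>\<^bsub>R\<^esub> v) \<odot>\<^bsub>M\<^esub> (s \<odot>\<^bsub>M\<^esub> m') = \<zero>\<^bsub>M\<^esub>"
  proof -
    have "(u \<otimes>\<^bsub>R\<^esub> v) \<odot>\<^bsub>M\<^esub> (s \<odot>\<^bsub>M\<^esub> m') = ((u \<otimes>\<^bsub>R\<^esub> v) \<otimes>\<^bsub>R\<^esub> s) \<odot>\<^bsub>M\<^esub> m'"
      using assms by (simp add: M.smult_assoc1)
    also have "(u \<otimes>\<^bsub>R\<^esub> v) \<otimes>\<^bsub>R\<^esub> s = (u \<otimes>\<^bsub>R\<^esub> s) \<otimes>\<^bsub>R\<^esub> v"
      using assms by (simp add: M.R.m_ac)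
    also have "((u \<otimes>\<^bsub>R\<^esub> s) \<otimes>\<^bsub>R\<^esub> v) \<odot>\<^bsub>M\<^esub> m' = \<zero>\<^bsub>M\<^esub>"
      using assms by (simp add: M.smult_assoc1)
    finally show ?thesis .
  qed
  show ?thesis using assms 1 2
    by (simp add: a_minus_def M.smult_r_distr M.smult_r_minus)
qed

lemma loc_nonzero_iff:
  assumes "module R M" and "primeideal p R"
  shows "loc_nonzero R M p \<longleftrightarrow> (\<exists>m\<in>carrier M. \<forall>u\<in>carrier R - p. u \<odot>\<^bsub>M\<^esub> m \<noteq> \<zero>\<^bsub>M\<^esub>)"
proof -
  interpret M: module R M by fact
  interpret P: primeideal p R by fact
  have one: "\<one>\<^bsub>R\<^esub> \<in> carrier R - p" using P.I_notcarr P.one_imp_carrier by auto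
  define A where "A = carrier M \<times> (carrier R - p)"
  show ?thesis
  proof
    assume nz: "loc_nonzero R M p"
    show "\<exists>m\<in>carrier M. \<forall>u\<in>carrier R - p. u \<odot>\<^bsub>M\<^esub> m \<noteq> \<zero>\<^bsub>M\<^esub>"
    proof (rule ccontr)
      assume "\<not> ?thesis"
      hence H: "\<forall>m\<in>carrier M. \<exists>u\<in>carrier R - p. u \<odot>\<^bsub>M\<^esub> m = \<zero>\<^bsub>M\<^esub>" by blast
      have key: "((m, s), (m', s')) \<in> loc_rel R M p"
        if a: "(m, s) \<in> A" "(m', s') \<in> A" for m s m' s'
      proof -
          have c: "m \<in> carrier M" "m' \<in> carrier M" "s \<in> carrier R - p" "s' \<in> carrier R - p"
            using a unfolding A_def by auto
          obtain u where u: "u \<in> carrier R - p" "u \<odot>\<^bsub>M\<^esub> m = \<zero>\<^bsub>M\<^esub>" using H c by blast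
          obtain v where v: "v \<in> carrier R - p" "v \<odot>\<^bsub>M\<^esub> m' = \<zero>\<^bsub>M\<^esub>" using H c by blast
          have w: "u \<otimes>\<^bsub>R\<^esub> v \<in> carrier R - p" using u v P.I_prime by auto
          have "(u \<otimes>\<^bsub>R\<^esub> v) \<odot>\<^bsub>M\<^esub> ((s' \<odot>\<^bsub>M\<^esub> m) \<ominus>\<^bsub>M\<^esub> (s \<odot>\<^bsub>M\<^esub> m')) = \<zero>\<^bsub>M\<^esub>"
            using kill_lemma[OF assms(1)] u v c by auto
          thus "((m, s), (m', s')) \<in> loc_rel R M p" unfolding loc_rel_def using c w by blast
      qed
      have full: "loc_rel R M p = A \<times> A"
      proof
        show "loc_rel R M p \<subseteq> A \<times> A" unfolding loc_rel_def A_def by auto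
        show "A \<times> A \<subseteq> loc_rel R M p" using key by auto
      qed
      have Ane: "(\<zero>\<^bsub>M\<^esub>, \<one>\<^bsub>R\<^esub>) \<in> A" unfolding A_def using one by auto
      have "loc_carrier R M p = {A}"
        unfolding loc_carrier_def full A_def[symmetric] quotient_def using Ane by auto
      moreover have "loc_zero R M p = A" unfolding loc_zero_def full using Ane by auto
      ultimately show False using nz unfolding loc_nonzero_def by simp
    qed
  next
    assume "\<exists>m\<in>carrier M. \<forall>u\<in>carrier R - p. u \<odot>\<^bsub>M\<^esub> m \<noteq> \<zero>\<^bsub>M\<^esub>"
    then obtain m where m: "m \<in> carrier M" "\<forall>u\<in>carrier R - p. u \<odot>\<^bsub>M\<^esub> m \<noteq> \<zero>\<^bsub>M\<^esub>" by blast
    show "loc_nonzero R M p"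
      unfolding loc_nonzero_def
    proof
      assume eq: "loc_carrier R M p = {loc_zero R M p}"
      have refl: "((m, \<one>\<^bsub>R\<^esub>), (m, \<one>\<^bsub>R\<^esub>)) \<in> loc_rel R M p"
        unfolding loc_rel_def using m one by (auto intro!: bexI[of _ "\<one>\<^bsub>R\<^esub>"] simp: a_minus_def M.r_neg)
      have "loc_rel R M p `` {(m, \<one>\<^bsub>R\<^esub>)} \<in> loc_carrier R M p"
        unfolding loc_carrier_def using m one by (auto intro: quotientI)
      hence "loc_rel R M p `` {(m, \<one>\<^bsub>R\<^esub>)} = loc_zero R M p" using eq by auto
      hence "(m, \<one>\<^bsub>R\<^esub>) \<in> loc_zero R M p" using refl by auto
      then obtain u where u: "u \<in> carrier R - p"
        "u \<odot>\<^bsub>M\<^esub> ((\<one>\<^bsub>R\<^esub> \<odot>\<^bsub>M\<^esub> \<zero>\<^bsub>M\<^esub>) \<ominus>\<^bsub>M\<^esub> (\<one>\<^bsub>R\<^esub> \<odot>\<^bsub>M\<^esub> m)) = \<zero>\<^bsub>M\<^esub>"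
        unfolding loc_zero_def loc_rel_def by auto
      hence "\<ominus>\<^bsub>M\<^esub> (u \<odot>\<^bsub>M\<^esub> m) = \<zero>\<^bsub>M\<^esub>" using m
        by (simp add: a_minus_def M.smult_r_minus)
      moreover have "u \<odot>\<^bsub>M\<^esub> m = \<ominus>\<^bsub>M\<^esub> (\<ominus>\<^bsub>M\<^esub> (u \<odot>\<^bsub>M\<^esub> m))"
        using m u by (simp add: M.minus_minus)
      ultimately have "u \<odot>\<^bsub>M\<^esub> m = \<zero>\<^bsub>M\<^esub>" by simp
      thus False using m u by blast
    qed
  qed
qed


lemma sub_imp:
  assumes "module R M" and "primeideal p R"
    and "subquot_of_sum R (quot_module R p) M TYPE('c)"
  shows "\<exists>m\<in>carrier M. \<forall>u\<in>carrier R - p. u \<odot>\<^bsub>M\<^esub> m \<noteq> \<zero>\<^bsub>M\<^esub>"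
proof (rule ccontr)
  interpret M: module R M by fact
  interpret P: primeideal p R by fact
  assume "\<not> ?thesis"
  hence H: "\<forall>m\<in>carrier M. \<exists>u\<in>carrier R - p. u \<odot>\<^bsub>M\<^esub> m = \<zero>\<^bsub>M\<^esub>" by blast
  have one: "\<one>\<^bsub>R\<^esub> \<in> carrier R - p" using P.I_notcarr P.one_imp_carrier by auto
  obtain I :: "'c set" and K f where sm: "submodule K R (dsum_copies R M I)"
    and lin: "linear_on R (dsum_copies R M I) K (quot_module R p) f"
    and surj: "f ` K = carrier (quot_module R p)"
    using assms(3) unfolding subquot_of_sum_def by blast
  define D where "D = dsum_copies R M I"
  have Ksub: "K \<subseteq> carrier D"
    using subgroup.subset[OF submodule.axioms(1)[OF sm]] unfolding D_def by simp
  have "\<one>\<^bsub>R Quot p\<^esub> \<in> carrier (R Quot p)"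
    using ring.ring_simprules(6)[OF P.quotient_is_ring] .
  hence "p +>\<^bsub>R\<^esub> \<one>\<^bsub>R\<^esub> \<in> carrier (quot_module R p)"
    unfolding quot_module_def by (simp add: FactRing_def)
  then obtain k where kK: "k \<in> K" and fk: "f k = p +>\<^bsub>R\<^esub> \<one>\<^bsub>R\<^esub>"
    using surj by (metis imageE)
  have kc: "k \<in> carrier D" using kK Ksub by auto
  hence kM: "\<And>i. k i \<in> carrier M" and kfin: "finite {i. k i \<noteq> \<zero>\<^bsub>M\<^esub>}"
    unfolding D_def dsum_copies_def by auto
  have claim: "finite S \<Longrightarrow> \<exists>u\<in>carrier R - p. \<forall>i\<in>S. u \<odot>\<^bsub>M\<^esub> k i = \<zero>\<^bsub>M\<^esub>" for S
  proof (induction S rule: finite_induct)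
    case empty
    then show ?case using one by blast
  next
    case (insert j S)
    then obtain u where u: "u \<in> carrier R - p" "\<forall>i\<in>S. u \<odot>\<^bsub>M\<^esub> k i = \<zero>\<^bsub>M\<^esub>" by blast
    obtain v where v: "v \<in> carrier R - p" "v \<odot>\<^bsub>M\<^esub> k j = \<zero>\<^bsub>M\<^esub>" using H kM by blast
    have w: "v \<otimes>\<^bsub>R\<^esub> u \<in> carrier R - p" using u v P.I_prime by auto
    have "\<forall>i\<in>insert j S. (v \<otimes>\<^bsub>R\<^esub> u) \<odot>\<^bsub>M\<^esub> k i = \<zero>\<^bsub>M\<^esub>"
    proof
      fix i assume "i \<in> insert j S"
      then show "(v \<otimes>\<^bsub>R\<^esub> u) \<odot>\<^bsub>M\<^esub> k i = \<zero>\<^bsub>M\<^esub>"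
      proof
        assume "i = j"
        have "(v \<otimes>\<^bsub>R\<^esub> u) \<odot>\<^bsub>M\<^esub> k i = (u \<otimes>\<^bsub>R\<^esub> v) \<odot>\<^bsub>M\<^esub> k i"
          using u v by (simp add: M.R.m_comm)
        also have "\<dots> = \<zero>\<^bsub>M\<^esub>" using u v kM \<open>i = j\<close> by (simp add: M.smult_assoc1)
        finally show ?thesis .
      next
        assume "i \<in> S"
        thus ?thesis using u v kM by (simp add: M.smult_assoc1)
      qed
    qed
    thus ?case using w by blast
  qed
  obtain u where u: "u \<in> carrier R - p" "\<forall>i\<in>{i. k i \<noteq> \<zero>\<^bsub>M\<^esub>}. u \<odot>\<^bsub>M\<^esub> k i = \<zero>\<^bsub>M\<^esub>"
    using claim[OF kfin] by blast
  have allz: "u \<odot>\<^bsub>M\<^esub> k i = \<zero>\<^bsub>M\<^esub>" for i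
    using u by (cases "k i = \<zero>\<^bsub>M\<^esub>") auto
  have eq1: "u \<odot>\<^bsub>D\<^esub> k = \<zero>\<^bsub>R\<^esub> \<odot>\<^bsub>D\<^esub> k"
    unfolding D_def dsum_copies_def using allz kM by (auto intro!: ext)
  have fs: "\<And>r x. r \<in> carrier R \<Longrightarrow> x \<in> K \<Longrightarrow> f (r \<odot>\<^bsub>D\<^esub> x) = r \<odot>\<^bsub>quot_module R p\<^esub> f x"
    using lin unfolding linear_on_def D_def by blast
  have cos: "\<And>r. r \<in> carrier R \<Longrightarrow> r \<odot>\<^bsub>quot_module R p\<^esub> f k = p +>\<^bsub>R\<^esub> r"
    unfolding fk quot_module_def using P.rcoset_mult_add by (simp add: FactRing_def)
  have "p +>\<^bsub>R\<^esub> u = p +>\<^bsub>R\<^esub> \<zero>\<^bsub>R\<^esub>"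
    using fs[of u k] fs[of "\<zero>\<^bsub>R\<^esub>" k] cos[of u] cos[of "\<zero>\<^bsub>R\<^esub>"] eq1 u kK by auto
  also have "\<dots> = p" using P.a_rcos_const additive_subgroup.zero_closed[OF P.is_additive_subgroup] by simp
  finally have "u \<in> p" using P.a_rcos_self u by (metis DiffD1)
  thus False using u by blast
qed


lemma imp_sub:
  assumes "module R M" and "primeideal p R"
    and m: "m \<in> carrier M" and mu: "\<forall>u\<in>carrier R - p. u \<odot>\<^bsub>M\<^esub> m \<noteq> \<zero>\<^bsub>M\<^esub>"
  shows "subquot_of_sum R (quot_module R p) M TYPE('c)"
proof -
  interpret M: module R M by fact
  interpret P: primeideal p R by fact
  define c0 :: 'c where "c0 = undefined"
  define g where "g = (\<lambda>r. \<lambda>i::'c. if i = c0 then r \<odot>\<^bsub>M\<^esub> m else \<zero>\<^bsub>M\<^esub>)"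
  define D where "D = dsum_copies R M {c0}"
  define K where "K = g ` carrier R"
  define f where "f = (\<lambda>x. p +>\<^bsub>R\<^esub> (SOME r. r \<in> carrier R \<and> x c0 = r \<odot>\<^bsub>M\<^esub> m))"
  have gc: "g r \<in> carrier D" if "r \<in> carrier R" for r
  proof -
    have "{i. g r i \<noteq> \<zero>\<^bsub>M\<^esub>} \<subseteq> {c0}" unfolding g_def by auto
    hence "finite {i. g r i \<noteq> \<zero>\<^bsub>M\<^esub>}" by (rule finite_subset) simp
    thus ?thesis unfolding D_def dsum_copies_def using that m by (auto simp: g_def)
  qed
  have gadd: "g r \<oplus>\<^bsub>D\<^esub> g s = g (r \<oplus>\<^bsub>R\<^esub> s)" if "r \<in> carrier R" "s \<in> carrier R" for r s
    unfolding D_def dsum_copies_def g_def using that m by (auto intro!: ext simp: M.smult_l_distr)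
  have gsm: "t \<odot>\<^bsub>D\<^esub> g r = g (t \<otimes>\<^bsub>R\<^esub> r)" if "t \<in> carrier R" "r \<in> carrier R" for t r
    unfolding D_def dsum_copies_def g_def using that m by (auto intro!: ext simp: M.smult_assoc1)
  have g0: "g \<zero>\<^bsub>R\<^esub> = \<zero>\<^bsub>D\<^esub>"
    unfolding D_def dsum_copies_def g_def using m by (auto intro!: ext)
  have ginv: "inv\<^bsub>add_monoid D\<^esub> (g r) = g (\<ominus>\<^bsub>R\<^esub> r)" if r: "r \<in> carrier R" for r
    unfolding m_inv_def
  proof (rule the_equality)
    show "g (\<ominus>\<^bsub>R\<^esub> r) \<in> carrier (add_monoid D) \<and> g r \<otimes>\<^bsub>add_monoid D\<^esub> g (\<ominus>\<^bsub>R\<^esub> r) = \<one>\<^bsub>add_monoid D\<^esub>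
       \<and> g (\<ominus>\<^bsub>R\<^esub> r) \<otimes>\<^bsub>add_monoid D\<^esub> g r = \<one>\<^bsub>add_monoid D\<^esub>"
      using gc gadd g0 r by (simp add: M.R.r_neg M.R.l_neg)
  next
    fix y assume y: "y \<in> carrier (add_monoid D) \<and> g r \<otimes>\<^bsub>add_monoid D\<^esub> y = \<one>\<^bsub>add_monoid D\<^esub>
       \<and> y \<otimes>\<^bsub>add_monoid D\<^esub> g r = \<one>\<^bsub>add_monoid D\<^esub>"
    have yc: "\<And>i. y i \<in> carrier M" using y unfolding D_def dsum_copies_def by auto
    have ye: "y i \<oplus>\<^bsub>M\<^esub> g r i = \<zero>\<^bsub>M\<^esub>" for i
    proof -
      have "y \<oplus>\<^bsub>D\<^esub> g r = \<zero>\<^bsub>D\<^esub>" using y by simp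
      hence "(\<lambda>i. y i \<oplus>\<^bsub>M\<^esub> g r i) = (\<lambda>i. \<zero>\<^bsub>M\<^esub>)" unfolding D_def dsum_copies_def by simp
      thus ?thesis by (rule fun_cong)
    qed
    have grc: "g r i \<in> carrier M" for i unfolding g_def using r m by auto
    show "y = g (\<ominus>\<^bsub>R\<^esub> r)"
    proof
      fix i
      have "y i = \<ominus>\<^bsub>M\<^esub> (g r i)" using M.minus_equality[OF ye grc yc] by simp
      also have "\<dots> = g (\<ominus>\<^bsub>R\<^esub> r) i" unfolding g_def using r m by (simp add: M.smult_l_minus)
      finally show "y i = g (\<ominus>\<^bsub>R\<^esub> r) i" .
    qed
  qed
  have fg: "f (g r) = p +>\<^bsub>R\<^esub> r" if r: "r \<in> carrier R" for r
  proof -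
    define r' where "r' = (SOME r'. r' \<in> carrier R \<and> g r c0 = r' \<odot>\<^bsub>M\<^esub> m)"
    have "r' \<in> carrier R \<and> g r c0 = r' \<odot>\<^bsub>M\<^esub> m"
      unfolding r'_def by (rule someI[of _ r]) (simp add: g_def r)
    hence r'c: "r' \<in> carrier R" and rr: "r \<odot>\<^bsub>M\<^esub> m = r' \<odot>\<^bsub>M\<^esub> m" by (auto simp: g_def)
    have "(r \<ominus>\<^bsub>R\<^esub> r') \<odot>\<^bsub>M\<^esub> m = r \<odot>\<^bsub>M\<^esub> m \<oplus>\<^bsub>M\<^esub> \<ominus>\<^bsub>M\<^esub> (r' \<odot>\<^bsub>M\<^esub> m)"
      using r r'c m by (simp add: a_minus_def M.smult_l_distr M.smult_l_minus)
    also have "\<dots> = \<zero>\<^bsub>M\<^esub>" using rr r'c m by (simp add: M.r_neg)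
    finally have "r \<ominus>\<^bsub>R\<^esub> r' \<in> p" using mu r r'c by auto
    hence "r \<in> p +>\<^bsub>R\<^esub> r'"
      using P.a_rcos_module_minus[OF M.R.ring_axioms r'c r] by simp
    hence "p +>\<^bsub>R\<^esub> r' = p +>\<^bsub>R\<^esub> r" using P.a_repr_independence' r'c by blast
    thus ?thesis unfolding f_def r'_def by simp
  qed
  have sub: "submodule K R D"
    unfolding submodule_def submodule_axioms_def subgroup_def
  proof (intro conjI allI impI)
    show "K \<subseteq> carrier (add_monoid D)" unfolding K_def using gc by auto
    show "x \<otimes>\<^bsub>add_monoid D\<^esub> y \<in> K" if "x \<in> K" "y \<in> K" for x y
      using that gadd unfolding K_def by auto
    show "\<one>\<^bsub>add_monoid D\<^esub> \<in> K" unfolding K_def using g0[symmetric] by auto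
    show "inv\<^bsub>add_monoid D\<^esub> x \<in> K" if "x \<in> K" for x
      using that ginv unfolding K_def by auto
    show "a \<odot>\<^bsub>D\<^esub> x \<in> K" if "a \<in> carrier R" "x \<in> K" for a x
      using that gsm unfolding K_def by auto
  qed
  have lin: "linear_on R D K (quot_module R p) f"
    unfolding linear_on_def
  proof (intro conjI ballI)
    note hom = P.rcos_ring_hom
    show "f \<in> K \<rightarrow> carrier (quot_module R p)"
      unfolding K_def quot_module_def using fg ring_hom_closed[OF hom] by auto
    show "f (x \<oplus>\<^bsub>D\<^esub> y) = f x \<oplus>\<^bsub>quot_module R p\<^esub> f y" if "x \<in> K" "y \<in> K" for x y
      using that gadd fg ring_hom_add[OF hom] unfolding K_def quot_module_def by auto
    show "f (r \<odot>\<^bsub>D\<^esub> x) = r \<odot>\<^bsub>quot_module R p\<^esub> f x" if "r \<in> carrier R" "x \<in> K" for r x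
      using that gsm fg ring_hom_mult[OF hom] unfolding K_def quot_module_def by auto
  qed
  have surj: "f ` K = carrier (quot_module R p)"
  proof
    show "f ` K \<subseteq> carrier (quot_module R p)"
      using lin unfolding linear_on_def by auto
    show "carrier (quot_module R p) \<subseteq> f ` K"
    proof
      fix X assume "X \<in> carrier (quot_module R p)"
      then obtain r where r: "r \<in> carrier R" "X = p +>\<^bsub>R\<^esub> r"
        unfolding quot_module_def by (auto simp: FactRing_def A_RCOSETS_def a_r_coset_def RCOSETS_def)
      thus "X \<in> f ` K" using fg unfolding K_def by auto
    qed
  qed
  show ?thesis unfolding subquot_of_sum_def
    using sub lin surj unfolding D_def by blast
qed

theorem lemma2p4:
  fixes R :: "('a, 'r) ring_scheme" and M :: "('a, 'b, 'm) module_scheme"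
    and p :: "'a set"
  assumes "cring R" and "module R M" and "primeideal p R"
  shows "subquot_of_sum R (quot_module R p) M TYPE('c) \<longleftrightarrow> loc_nonzero R M p"
  using sub_imp[OF assms(2,3)] imp_sub[OF assms(2,3)] loc_nonzero_iff[OF assms(2,3)] by blast

end
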